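(* Let $\mathbf X$ be a periodic stationary process with period $1$, let $L$ be a first-time intrinsic location functional, and let $T\in(0,1]$. Then the càdlàg density of $L(\mathbf X,[0,T])$ on $(0,T)$ is non-increasing.
   Context: Let $H$ be a set of functions $\mathbb R\to\mathbb R$ with period $1$, invariant under shifts ($\theta_cg(x)=g(x+c)$), with the cylindrical $\sigma$-field; $\mathcal I$ is the set of compact intervals $[a,b]$, $a<b$. An intrinsic location functional is a map $L:H\times\mathcal I\to\mathbb R\cup\{\infty\}$ such that: (i) $L(\cdot,I)$ is measurable; (ii) $L(g,I)\in I\cup\{\infty\}$; (iii) $L(g,I)=L(\theta_cg,I-c)+c$ (with $\infty+c=\infty$); (iv) if $I_2\subseteq I_1$ and $L(g,I_1)\in I_2$ then $L(g,I_2)=L(g,I_1)$; (v) if $I_2\subseteq I_1$ and $L(g,I_2)\ne\infty$ then $L(g,I_1)\neq\infty$. A partially ordered random set representation of $L$ is an assignment, to each $g\in H$, of a set $S(g)\subseteq\mathbb R$ and a partial order $\preceq$ on $S(g)$ such that $S(g)=S(\theta_cg)+c$ for all $c$, $t_1\preceq t_2$ in $S(g)$ implies $t_1-c\preceq t_2-c$ in $S(\theta_cg)$, and for each $I\in\mathcal I$: if $S(g)\cap I=\emptyset$ then $L(g,I)=\infty$, otherwise $L(g,I)$ is the unique maximal element of $S(g)\cap I$ under $\preceq$. (Every intrinsic location functional has such a representation.) $L$ is a first-time intrinsic location functional if it has such a representation with the property that for all $t_1,t_2\in S(g)$, $t_1\le t_2$ implies $t_2\preceq t_1$. A periodic stationary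 process with period $1$ is a stationary process with continuous sample paths of period $1$ lying in $H$. *)

theory Defs
  imports "HOL-Probability.Probability"
begin

definition theta :: "real \<Rightarrow> (real \<Rightarrow> real) \<Rightarrow> (real \<Rightarrow> real)" where
  "theta c g = (\<lambda>x. g (x + c))"

abbreviation cyl :: "(real \<Rightarrow> real) measure" where
  "cyl \<equiv> PiM UNIV (\<lambda>_::real. (borel :: real measure))"

definition shift_inv_periodic_set :: "(real \<Rightarrow> real) set \<Rightarrow> bool" where
  "shift_inv_periodic_set H \<longleftrightarrow>
     (\<forall>g\<in>H. \<forall>x. g (x + 1) = g x) \<and> (\<forall>g\<in>H. \<forall>c. theta c g \<in> H)"

text \<open>Intrinsic location functional. The compact interval [a,b] (a<b) is
  given by its endpoints; the value PInf encodes infinity.\<close>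
definition intrinsic_location_functional ::
  "(real \<Rightarrow> real) set \<Rightarrow> ((real \<Rightarrow> real) \<Rightarrow> real \<Rightarrow> real \<Rightarrow> ereal) \<Rightarrow> bool" where
  "intrinsic_location_functional H L \<longleftrightarrow>
     (\<forall>a b. a < b \<longrightarrow> (\<lambda>g. L g a b) \<in> restrict_space cyl H \<rightarrow>\<^sub>M (borel :: ereal measure)) \<and>
     (\<forall>g\<in>H. \<forall>a b. a < b \<longrightarrow> L g a b = \<infinity> \<or> (\<exists>t. L g a b = ereal t \<and> a \<le> t \<and> t \<le> b)) \<and>
     (\<forall>g\<in>H. \<forall>a b c. a < b \<longrightarrow> L g a b = L (theta c g) (a - c) (b - c) + ereal c) \<and>
     (\<forall>g\<in>H. \<forall>a1 b1 a2 b2. a2 < b2 \<longrightarrow> a1 \<le> a2 \<longrightarrow> b2 \<le> b1 \<longrightarrow>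
        (\<exists>t. L g a1 b1 = ereal t \<and> a2 \<le> t \<and> t \<le> b2) \<longrightarrow> L g a2 b2 = L g a1 b1) \<and>
     (\<forall>g\<in>H. \<forall>a1 b1 a2 b2. a2 < b2 \<longrightarrow> a1 \<le> a2 \<longrightarrow> b2 \<le> b1 \<longrightarrow>
        L g a2 b2 \<noteq> \<infinity> \<longrightarrow> L g a1 b1 \<noteq> \<infinity>)"

definition po_random_set_rep ::
  "(real \<Rightarrow> real) set \<Rightarrow> ((real \<Rightarrow> real) \<Rightarrow> real \<Rightarrow> real \<Rightarrow> ereal) \<Rightarrow>
   ((real \<Rightarrow> real) \<Rightarrow> real set) \<Rightarrow> ((real \<Rightarrow> real) \<Rightarrow> real \<Rightarrow> real \<Rightarrow> bool) \<Rightarrow> bool" where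
  "po_random_set_rep H L S R \<longleftrightarrow>
     (\<forall>g\<in>H.
        (\<forall>t\<in>S g. R g t t) \<and>
        (\<forall>t1\<in>S g. \<forall>t2\<in>S g. R g t1 t2 \<longrightarrow> R g t2 t1 \<longrightarrow> t1 = t2) \<and>
        (\<forall>t1\<in>S g. \<forall>t2\<in>S g. \<forall>t3\<in>S g. R g t1 t2 \<longrightarrow> R g t2 t3 \<longrightarrow> R g t1 t3) \<and>
        (\<forall>c. S g = (\<lambda>t. t + c) ` S (theta c g)) \<and>
        (\<forall>c. \<forall>t1\<in>S g. \<forall>t2\<in>S g. R g t1 t2 \<longrightarrow> R (theta c g) (t1 - c) (t2 - c)) \<and>
        (\<forall>a b. a < b \<longrightarrow>
           (S g \<inter> {a..b} = {} \<longrightarrow> L g a b = \<infinity>) \<and>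
           (S g \<inter> {a..b} \<noteq> {} \<longrightarrow>
              (\<exists>t. L g a b = ereal t \<and> t \<in> S g \<inter> {a..b} \<and>
                   (\<forall>s\<in>S g \<inter> {a..b}. R g t s \<longrightarrow> s = t) \<and>
                   (\<forall>u\<in>S g \<inter> {a..b}. (\<forall>s\<in>S g \<inter> {a..b}. R g u s \<longrightarrow> s = u) \<longrightarrow> u = t)))))"

definition first_time_ILF ::
  "(real \<Rightarrow> real) set \<Rightarrow> ((real \<Rightarrow> real) \<Rightarrow> real \<Rightarrow> real \<Rightarrow> ereal) \<Rightarrow> bool" where
  "first_time_ILF H L \<longleftrightarrow> intrinsic_location_functional H L \<and>
     (\<exists>S R. po_random_set_rep H L S R \<and>
        (\<forall>g\<in>H. \<forall>t1\<in>S g. \<forall>t2\<in>S g. t1 \<le> t2 \<longrightarrow> R g t2 t1))"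

definition periodic_stationary_process ::
  "'a measure \<Rightarrow> ('a \<Rightarrow> real \<Rightarrow> real) \<Rightarrow> (real \<Rightarrow> real) set \<Rightarrow> bool" where
  "periodic_stationary_process M X H \<longleftrightarrow>
     prob_space M \<and> X \<in> M \<rightarrow>\<^sub>M cyl \<and>
     (\<forall>\<omega>\<in>space M. X \<omega> \<in> H \<and> continuous_on UNIV (X \<omega>) \<and> (\<forall>x. X \<omega> (x + 1) = X \<omega> x)) \<and>
     (\<forall>c. distr M cyl (\<lambda>\<omega>. theta c (X \<omega>)) = distr M cyl X)"

end

theory Submission
  imports Defs
begin


lemma sum_lower:
  fixes G :: "real \<Rightarrow> real"
  assumes "\<And>j. j < n \<Longrightarrow> c \<le> G (s + real (Suc j) * \<delta>) - G (s + real j * \<delta>)"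
  shows "real n * c \<le> G (s + real n * \<delta>) - G s"
  using assms
proof (induction n)
  case 0 then show ?case by simp
next
  case (Suc n)
  have "real n * c \<le> G (s + real n * \<delta>) - G s" using Suc by auto
  moreover have "c \<le> G (s + real (Suc n) * \<delta>) - G (s + real n * \<delta>)" using Suc.prems by auto
  ultimately show ?case by (simp add: algebra_simps)
qed

lemma sum_upper:
  fixes G :: "real \<Rightarrow> real"
  assumes "\<And>j. j < n \<Longrightarrow> G (s + real (Suc j) * \<delta>) - G (s + real j * \<delta>) \<le> c"
  shows "G (s + real n * \<delta>) - G s \<le> real n * c"
  using sum_lower[of n "-c" "\<lambda>x. - G x" s \<delta>] assms by fastforce

lemma concave_from_incr:
  fixes F :: "real \<Rightarrow> real"
  assumes mono: "\<And>x y. x \<le> y \<Longrightarrow> F x \<le> F y"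
  and incr: "\<And>s s' h. 0 < s \<Longrightarrow> s \<le> s' \<Longrightarrow> 0 < h \<Longrightarrow> s' + h < T \<Longrightarrow> F (s'+h) - F s' \<le> F (s+h) - F s"
  and xyz: "0 < x" "x < y" "y < z" "z < T"
  shows "(F z - F y) * (y - x) \<le> (F y - F x) * (z - y)"
proof -
  define A where "A = F y - F x"
  define B where "B = F z - F y"
  have A0: "0 \<le> A" "0 \<le> B" using mono xyz by (auto simp: A_def B_def)
  have key: "B * (y - x) \<le> A * (z - y) + (A + B) * \<delta>" if \<delta>: "0 < \<delta>" "\<delta> \<le> y - x" "\<delta> \<le> T - z" for \<delta>
  proof -
    define m where "m = nat \<lfloor>(y - x)/\<delta>\<rfloor>"
    define k where "k = nat \<lceil>(z - y)/\<delta>\<rceil>"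
    define d where "d = F y - F (y - \<delta>)"
    have d0: "0 \<le> d" using mono[of "y - \<delta>" y] \<delta> by (simp add: d_def)
    have q1: "0 \<le> (y - x)/\<delta>" "0 \<le> (z - y)/\<delta>" using \<delta> xyz by auto
    have m1: "real m = of_int \<lfloor>(y - x)/\<delta>\<rfloor>" using q1 by (simp add: m_def)
    have k1: "real k = of_int \<lceil>(z - y)/\<delta>\<rceil>" using q1 by (simp add: k_def)
    have m2: "real m \<le> (y - x)/\<delta>" "(y - x)/\<delta> < real m + 1" unfolding m1 by linarith+
    have k2: "(z - y)/\<delta> \<le> real k" "real k < (z - y)/\<delta> + 1" unfolding k1 by linarith+
    have m3: "real m * \<delta> \<le> y - x" "y - x < real m * \<delta> + \<delta>"
      using m2 \<delta> by (simp_all add: field_simps)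
    have k3: "z - y \<le> real k * \<delta>" "real k * \<delta> < z - y + \<delta>"
      using k2 \<delta> by (simp_all add: field_simps)
    have Am: "real m * d \<le> A"
    proof -
      have "real m * d \<le> F (x + real m * \<delta>) - F x"
      proof (rule sum_lower)
        fix j assume "j < m"
        then have "real (Suc j) \<le> real m" by simp
        hence "real (Suc j) * \<delta> \<le> real m * \<delta>" using \<delta> by (simp add: mult_right_mono)
        then have 1: "x + real j * \<delta> \<le> y - \<delta>" using m3 by (simp add: algebra_simps)
        have 2: "0 < x + real j * \<delta>" using xyz \<delta> by (simp add: add_pos_nonneg)
        have "F (y - \<delta> + \<delta>) - F (y - \<delta>) \<le> F (x + real j * \<delta> + \<delta>) - F (x + real j * \<delta>)"
          by (rule incr) (use 1 2 \<delta> xyz in auto)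
        then show "d \<le> F (x + real (Suc j) * \<delta>) - F (x + real j * \<delta>)"
          by (simp add: d_def algebra_simps)
      qed
      also have "\<dots> \<le> A" using mono[of "x + real m * \<delta>" y] m3 by (simp add: A_def)
      finally show ?thesis .
    qed
    have Bk: "B \<le> real k * d"
    proof -
      have "B \<le> F (y + real k * \<delta>) - F y" using mono[of z "y + real k * \<delta>"] k3 by (simp add: B_def)
      also have "\<dots> \<le> real k * d"
      proof (rule sum_upper)
        fix j assume "j < k"
        then have "real (Suc j) \<le> real k" by simp
        hence "real (Suc j) * \<delta> \<le> real k * \<delta>" using \<delta> by (simp add: mult_right_mono)
        then have 1: "y + real j * \<delta> + \<delta> < T" using k3 \<delta> by (simp add: algebra_simps)
        have "0 \<le> real j * \<delta>" using \<delta> by simp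
        then have 2: "y - \<delta> \<le> y + real j * \<delta>" using \<delta> by linarith
        have "F (y + real j * \<delta> + \<delta>) - F (y + real j * \<delta>) \<le> F (y - \<delta> + \<delta>) - F (y - \<delta>)"
          by (rule incr) (use 1 2 \<delta> xyz in auto)
        then show "F (y + real (Suc j) * \<delta>) - F (y + real j * \<delta>) \<le> d"
          by (simp add: d_def algebra_simps)
      qed
      finally show ?thesis .
    qed
    have "B * real m \<le> A * real k"
    proof -
      have "B * real m \<le> real k * d * real m" using Bk by (simp add: mult_right_mono)
      also have "\<dots> = real k * (real m * d)" by simp
      also have "\<dots> \<le> real k * A" using Am by (simp add: mult_left_mono)
      finally show ?thesis by (simp add: mult.commute)
    qed
    hence "B * (real m * \<delta>) \<le> A * (real k * \<delta>)" using \<delta>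
      by (metis mult.assoc mult_right_mono less_eq_real_def)
    have "B * (y - x) \<le> B * (real m * \<delta> + \<delta>)" using A0 m3 by (simp add: mult_left_mono)
    also have "\<dots> = B * (real m * \<delta>) + B * \<delta>" by (simp add: algebra_simps)
    also have "\<dots> \<le> A * (real k * \<delta>) + B * \<delta>" using \<open>B * (real m * \<delta>) \<le> A * (real k * \<delta>)\<close> by simp
    also have "\<dots> \<le> A * (z - y + \<delta>) + B * \<delta>" using A0 k3 by (simp add: mult_left_mono)
    finally show ?thesis by (simp add: algebra_simps)
  qed
  have "B * (y - x) \<le> A * (z - y)"
  proof (rule field_le_epsilon)
    fix e :: real assume e: "0 < e"
    define \<delta> where "\<delta> = min (min (y - x) (T - z)) (e / (A + B + 1))"
    have \<delta>: "0 < \<delta>" "\<delta> \<le> y - x" "\<delta> \<le> T - z" "\<delta> \<le> e / (A + B + 1)"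
      using e xyz A0 by (auto simp: \<delta>_def)
    have "(A + B) * \<delta> \<le> (A + B) * (e / (A + B + 1))" using \<delta>(4) A0 by (intro mult_left_mono) auto
    also have "\<dots> \<le> e" using A0 e by (simp add: field_simps)
    finally show "B * (y - x) \<le> A * (z - y) + e" using key[OF \<delta>(1-3)] by simp
  qed
  then show ?thesis by (simp add: A_def B_def)
qed




lemma density_from_concave:
  fixes F :: "real \<Rightarrow> real" and T :: real
  assumes mono: "\<And>x y. x \<le> y \<Longrightarrow> F x \<le> F y"
  and conc: "\<And>x y z. 0 < x \<Longrightarrow> x < y \<Longrightarrow> y < z \<Longrightarrow> z < T \<Longrightarrow> (F z - F y) * (y - x) \<le> (F y - F x) * (z - y)"
  shows "\<exists>f. (\<forall>x\<in>{0<..<T}. 0 \<le> f x) \<and>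
    (\<forall>x\<in>{0<..<T}. continuous (at_right x) f \<and> (\<exists>l. (f \<longlongrightarrow> l) (at_left x))) \<and>
    (\<forall>x y. 0 < x \<longrightarrow> x \<le> y \<longrightarrow> y < T \<longrightarrow> f y \<le> f x) \<and>
    (\<forall>x y. 0 < x \<longrightarrow> x < y \<longrightarrow> y < T \<longrightarrow> f y * (y - x) \<le> F y - F x \<and> F y - F x \<le> f x * (y - x))"
proof -
  define \<sigma> where "\<sigma> x y = (F y - F x) / (y - x)" for x y
  have s1: "\<sigma> y z \<le> \<sigma> x y" if "0 < x" "x < y" "y < z" "z < T" for x y z
    using conc[OF that] that by (simp add: \<sigma>_def divide_simps mult.commute)
  have s0: "0 \<le> \<sigma> x y" if "x < y" for x y
    using mono[of x y] that by (simp add: \<sigma>_def)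
  have sEq: "F y - F x = \<sigma> x y * (y - x)" if "x < y" for x y
    using that by (simp add: \<sigma>_def)
  define f where "f x = Sup (\<sigma> x ` {x<..<T})" for x
  have ne: "\<sigma> x ` {x<..<T} \<noteq> {}" if "x < T" for x using that by auto
  have bdd: "bdd_above (\<sigma> x ` {x<..<T})" if "0 < x" "x < T" for x
  proof -
    have "\<forall>y\<in>{x<..<T}. \<sigma> x y \<le> \<sigma> (x/2) x" using s1[of "x/2" x] that by auto
    then show ?thesis by (auto intro: bdd_aboveI2)
  qed
  have fup: "\<sigma> x y \<le> f x" if "0 < x" "x < y" "y < T" for x y
    unfolding f_def using that bdd[of x] by (intro cSup_upper) auto
  have flow: "f y \<le> \<sigma> x y" if "0 < x" "x < y" "y < T" for x y
    unfolding f_def using that ne[of y] by (intro cSup_least) (auto intro: s1)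
  have fmono: "f y \<le> f x" if "0 < x" "x \<le> y" "y < T" for x y
  proof (cases "x = y")
    case False
    then have "x < y" using that by simp
    then show ?thesis using flow[of x y] fup[of x y] that by simp
  qed simp
  have fnn: "0 \<le> f x" if "0 < x" "x < T" for x
    using fup[of x "(x + T)/2"] s0[of x "(x+T)/2"] that by simp
  have rc: "continuous (at_right x) f" if x: "0 < x" "x < T" for x
    unfolding continuous_within
  proof (rule order_tendstoI)
    fix a assume "f x < a"
    have "eventually (\<lambda>y. y \<in> {x<..<T}) (at_right x)" by (rule eventually_at_right_real[OF x(2)])
    then show "eventually (\<lambda>y. f y < a) (at_right x)"
    proof eventually_elim
      case (elim y) then have "f y \<le> f x" using fmono[of x y] x by auto
      then show ?case using \<open>f x < a\<close> by simp
    qed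
  next
    fix a assume "a < f x"
    then obtain z where z: "z \<in> {x<..<T}" "a < \<sigma> x z"
      using less_cSup_iff[OF ne bdd, of x a] x unfolding f_def by auto
    have ev: "eventually (\<lambda>y. y \<in> {x<..<z}) (at_right x)" using z by (intro eventually_at_right_real) auto
    have "eventually (\<lambda>y. y \<in> {x<..<T}) (at_right x)" by (rule eventually_at_right_real[OF x(2)])
    have Ft: "(F \<longlongrightarrow> F x) (at_right x)"
    proof (rule tendsto_sandwich[where f="\<lambda>_. F x" and h="\<lambda>y. F x + f x * (y - x)"])
      show "eventually (\<lambda>y. F x \<le> F y) (at_right x)"
        using \<open>eventually (\<lambda>y. y \<in> {x<..<T}) (at_right x)\<close> by eventually_elim (use mono in auto)
      show "eventually (\<lambda>y. F y \<le> F x + f x * (y - x)) (at_right x)"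
        using \<open>eventually (\<lambda>y. y \<in> {x<..<T}) (at_right x)\<close>
      proof eventually_elim
        case (elim y)
        have m: "\<sigma> x y * (y - x) \<le> f x * (y - x)" using fup[of x y] x elim by (intro mult_right_mono) auto
        have "F y - F x = \<sigma> x y * (y - x)" using sEq[of x y] elim by simp
        then show ?case using m by linarith
      qed
      show "((\<lambda>_. F x) \<longlongrightarrow> F x) (at_right x)" by simp
      have "((\<lambda>y. F x + f x * (y - x)) \<longlongrightarrow> F x + f x * (x - x)) (at_right x)"
        by (intro tendsto_intros)
      then show "((\<lambda>y. F x + f x * (y - x)) \<longlongrightarrow> F x) (at_right x)" by simp
    qed
    have "((\<lambda>y. (F z - F y) / (z - y)) \<longlongrightarrow> (F z - F x) / (z - x)) (at_right x)"
      using z by (intro tendsto_intros Ft) auto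
    then have "((\<lambda>y. \<sigma> y z) \<longlongrightarrow> \<sigma> x z) (at_right x)" by (simp add: \<sigma>_def)
    then have "eventually (\<lambda>y. a < \<sigma> y z) (at_right x)" using z(2) by (rule order_tendstoD)
    with ev show "eventually (\<lambda>y. a < f y) (at_right x)"
    proof eventually_elim
      case (elim y) then have "\<sigma> y z \<le> f y" using fup[of y z] z x by auto
      then show ?case using elim by simp
    qed
  qed
  have ll: "\<exists>l. (f \<longlongrightarrow> l) (at_left x)" if x: "0 < x" "x < T" for x
  proof
    have ne2: "f ` {0<..<x} \<noteq> {}" using x by auto
    have bb: "bdd_below (f ` {0<..<x})" using fmono[of _ x] x by (intro bdd_belowI2[where m="f x"]) auto
    show "(f \<longlongrightarrow> Inf (f ` {0<..<x})) (at_left x)"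
    proof (rule order_tendstoI)
      fix a assume a: "a < Inf (f ` {0<..<x})"
      show "eventually (\<lambda>y. a < f y) (at_left x)"
        using eventually_at_left_real[OF x(1)]
        by eventually_elim (use a cInf_lower[OF _ bb] in force)
    next
      fix a assume "Inf (f ` {0<..<x}) < a"
      then obtain y0 where y0: "y0 \<in> {0<..<x}" "f y0 < a" using cInf_less_iff[OF ne2 bb] by auto
      have "eventually (\<lambda>y. y \<in> {y0<..<x}) (at_left x)" using y0 by (intro eventually_at_left_real) auto
      then show "eventually (\<lambda>y. f y < a) (at_left x)"
      proof eventually_elim
        case (elim y) then have "f y \<le> f y0" using fmono[of y0 y] y0 x by auto
        then show ?case using y0 by simp
      qed
    qed
  qed
  show ?thesis
  proof (intro exI[of _ f] conjI ballI allI impI)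
    fix x assume "x \<in> {0<..<T}" then show "0 \<le> f x" using fnn by auto
  next
    fix x assume "x \<in> {0<..<T}" then show "continuous (at_right x) f" using rc by auto
  next
    fix x assume "x \<in> {0<..<T}" then show "\<exists>l. (f \<longlongrightarrow> l) (at_left x)" using ll by auto
  next
    fix x y :: real assume "0 < x" "x \<le> y" "y < T" then show "f y \<le> f x" using fmono by auto
  next
    fix x y :: real assume xy: "0 < x" "x < y" "y < T"
    show "f y * (y - x) \<le> F y - F x" using sEq[of x y] flow[OF xy] xy by (simp add: mult_right_mono)
    show "F y - F x \<le> f x * (y - x)" using sEq[of x y] fup[OF xy] xy by (simp add: mult_right_mono)
  qed
qed




lemma squeeze_eq:
  fixes G1 G2 \<phi> :: "real \<Rightarrow> real"
  assumes ab: "a < b"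
  and phi: "\<And>x y. a \<le> x \<Longrightarrow> x \<le> y \<Longrightarrow> y \<le> b \<Longrightarrow> \<phi> y \<le> \<phi> x"
  and b1: "\<And>x y. a \<le> x \<Longrightarrow> x < y \<Longrightarrow> y \<le> b \<Longrightarrow> \<phi> y * (y-x) \<le> G1 y - G1 x \<and> G1 y - G1 x \<le> \<phi> x * (y-x)"
  and b2: "\<And>x y. a \<le> x \<Longrightarrow> x < y \<Longrightarrow> y \<le> b \<Longrightarrow> \<phi> y * (y-x) \<le> G2 y - G2 x \<and> G2 y - G2 x \<le> \<phi> x * (y-x)"
  shows "G1 b - G1 a = G2 b - G2 a"
proof -
  define D where "D x = G1 x - G2 x" for x
  have Db: "\<bar>D y - D x\<bar> \<le> (\<phi> x - \<phi> y) * (y - x)" if "a \<le> x" "x < y" "y \<le> b" for x y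
  proof -
    have e: "(\<phi> x - \<phi> y) * (y - x) = \<phi> x * (y-x) - \<phi> y * (y-x)" by (simp add: algebra_simps)
    show ?thesis using b1[OF that] b2[OF that] unfolding e D_def abs_le_iff by linarith
  qed
  define K where "K = (\<phi> a - \<phi> b) * (b - a)"
  have bound: "\<bar>D b - D a\<bar> * real n \<le> K" if n: "n > 0" for n :: nat
  proof -
    define \<delta> where "\<delta> = (b - a) / real n"
    define p where "p i = a + real i * \<delta>" for i :: nat
    have d0: "0 < \<delta>" using ab n by (simp add: \<delta>_def)
    have pn: "p n = b" using n by (simp add: p_def \<delta>_def)
    have p0: "p 0 = a" by (simp add: p_def)
    have prange: "a \<le> p i \<and> p i \<le> b" if "i \<le> n" for i
    proof -
      have "real i * \<delta> \<le> real n * \<delta>" using that d0 by (simp add: mult_right_mono)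
      moreover have "0 \<le> real i * \<delta>" using d0 by simp
      ultimately show ?thesis using pn unfolding p_def by linarith
    qed
    have pstep: "p (Suc i) - p i = \<delta>" for i by (simp add: p_def algebra_simps)
    have "D b - D a = (\<Sum>i<n. D (p (Suc i)) - D (p i))"
      by (subst sum_lessThan_telescope) (simp add: pn p0)
    then have "\<bar>D b - D a\<bar> \<le> (\<Sum>i<n. \<bar>D (p (Suc i)) - D (p i)\<bar>)"
      by (simp add: sum_abs)
    also have "\<dots> \<le> (\<Sum>i<n. (\<phi> (p i) - \<phi> (p (Suc i))) * \<delta>)"
    proof (rule sum_mono)
      fix i assume "i \<in> {..<n}"
      then have "a \<le> p i" "p (Suc i) \<le> b" using prange[of i] prange[of "Suc i"] by auto
      moreover have "p i < p (Suc i)" using pstep[of i] d0 by simp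
      ultimately show "\<bar>D (p (Suc i)) - D (p i)\<bar> \<le> (\<phi> (p i) - \<phi> (p (Suc i))) * \<delta>"
        using Db[of "p i" "p (Suc i)"] pstep[of i] by simp
    qed
    also have "\<dots> = (\<Sum>i<n. \<phi> (p i) - \<phi> (p (Suc i))) * \<delta>" by (simp add: sum_distrib_right)
    also have "(\<Sum>i<n. \<phi> (p i) - \<phi> (p (Suc i))) = \<phi> a - \<phi> b"
    proof -
      have "(\<Sum>i<n. \<phi> (p i) - \<phi> (p (Suc i))) = - (\<Sum>i<n. \<phi> (p (Suc i)) - \<phi> (p i))"
        by (simp add: sum_negf[symmetric])
      also have "\<dots> = \<phi> a - \<phi> b" by (subst sum_lessThan_telescope) (simp add: pn p0)
      finally show ?thesis .
    qed
    finally have "\<bar>D b - D a\<bar> \<le> (\<phi> a - \<phi> b) * \<delta>" .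
    then have "\<bar>D b - D a\<bar> * real n \<le> (\<phi> a - \<phi> b) * \<delta> * real n" using n by (simp add: mult_right_mono)
    also have "\<dots> = K" using n by (simp add: K_def \<delta>_def)
    finally show ?thesis .
  qed
  have "\<bar>D b - D a\<bar> = 0"
  proof (rule ccontr)
    assume "\<bar>D b - D a\<bar> \<noteq> 0"
    then have c: "\<bar>D b - D a\<bar> > 0" by simp
    obtain n :: nat where n: "K / \<bar>D b - D a\<bar> < real n" using reals_Archimedean2 by blast
    have K0: "0 \<le> K" using phi[of a b] ab by (simp add: K_def)
    then have q: "0 \<le> K / \<bar>D b - D a\<bar>" using c by simp
    have "n > 0"
    proof (rule ccontr)
      assume "\<not> n > 0" then have "real n = 0" by simp
      then show False using n q by linarith
    qed
    then have "\<bar>D b - D a\<bar> * real n \<le> K" by (rule bound)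
    moreover have "K < \<bar>D b - D a\<bar> * real n" using n c by (simp add: field_simps)
    ultimately show False by simp
  qed
  then show ?thesis by (simp add: D_def)
qed




lemma analytic_main:
  fixes \<nu> :: "real measure" and T :: real
  assumes fin: "finite_measure \<nu>" and sets: "sets \<nu> = sets borel" and T: "0 < T"
  and incr: "\<And>s s' h. 0 < s \<Longrightarrow> s \<le> s' \<Longrightarrow> 0 < h \<Longrightarrow> s' + h < T \<Longrightarrow>
      measure \<nu> {s'<..s'+h} \<le> measure \<nu> {s<..s+h}"
  shows "\<exists>f :: real \<Rightarrow> real. (\<forall>x\<in>{0<..<T}. 0 \<le> f x) \<and>
     (\<forall>x\<in>{0<..<T}. continuous (at_right x) f \<and> (\<exists>l. (f \<longlongrightarrow> l) (at_left x))) \<and>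
     (\<forall>B\<in>sets borel. B \<subseteq> {0<..<T} \<longrightarrow> emeasure \<nu> B = (\<integral>\<^sup>+ x. ennreal (f x) * indicator B x \<partial>lborel)) \<and>
     (\<forall>x y. 0 < x \<longrightarrow> x \<le> y \<longrightarrow> y < T \<longrightarrow> f y \<le> f x)"
proof -
  interpret finite_measure \<nu> by (rule fin)
  have sets_in[measurable]: "A \<in> sets \<nu>" if "A \<in> sets borel" for A using that sets by simp
  define F where "F x = measure \<nu> {..x}" for x
  have Fmono: "F x \<le> F y" if "x \<le> y" for x y
    unfolding F_def using that by (intro finite_measure_mono) auto
  have Fioc: "measure \<nu> {x<..y} = F y - F x" if "x \<le> y" for x y
  proof -
    have "{x<..y} = {..y} - {..x}" by auto
    then show ?thesis unfolding F_def using that by (simp add: finite_measure_Diff)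
  qed
  have Fincr: "F (s'+h) - F s' \<le> F (s+h) - F s" if "0 < s" "s \<le> s'" "0 < h" "s' + h < T" for s s' h
    using incr[OF that] Fioc[of s' "s'+h"] Fioc[of s "s+h"] that by simp
  have conc: "(F z - F y) * (y - x) \<le> (F y - F x) * (z - y)" if "0 < x" "x < y" "y < z" "z < T" for x y z
    by (rule concave_from_incr[where T=T]) (use Fmono Fincr that in auto)
  obtain f where fnn: "\<forall>x\<in>{0<..<T}. 0 \<le> f x"
    and fcont: "\<forall>x\<in>{0<..<T}. continuous (at_right x) f \<and> (\<exists>l. (f \<longlongrightarrow> l) (at_left x))"
    and fmono: "\<forall>x y. 0 < x \<longrightarrow> x \<le> y \<longrightarrow> y < T \<longrightarrow> f y \<le> f x"
    and fbd: "\<forall>x y. 0 < x \<longrightarrow> x < y \<longrightarrow> y < T \<longrightarrow> f y * (y - x) \<le> F y - F x \<and> F y - F x \<le> f x * (y - x)"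
    using density_from_concave[of F T, OF Fmono conc] by blast
  define g where "g x = ennreal (f x) * indicator {0<..<T} x" for x
  have "mono_on {0<..<T} (\<lambda>x. - f x)"
    using fmono by (auto simp: mono_on_def)
  then have "(\<lambda>x. - f x) \<in> borel_measurable (restrict_space borel {0<..<T})"
    by (rule borel_measurable_mono_on_fnc)
  then have "(\<lambda>x. - (- f x)) \<in> borel_measurable (restrict_space borel {0<..<T})"
    by (rule borel_measurable_uminus)
  then have "(\<lambda>x. ennreal (f x)) \<in> borel_measurable (restrict_space borel {0<..<T})"
    by (intro measurable_compose[OF _ measurable_ennreal]) simp
  then have gm_borel: "g \<in> borel_measurable borel"
    unfolding g_def by (subst (asm) borel_measurable_restrict_space_iff_ennreal) auto
  then have gm[measurable]: "g \<in> borel_measurable lborel" by simp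
  define I where "I x y = (\<integral>\<^sup>+ z. g z * indicator {x<..y} z \<partial>lborel)" for x y
  have Iup: "I x y \<le> ennreal (f x * (y - x))" if "0 < x" "x < y" "y < T" for x y
  proof -
    have "I x y \<le> (\<integral>\<^sup>+ z. ennreal (f x) * indicator {x<..y} z \<partial>lborel)"
      unfolding I_def
    proof (intro nn_integral_mono)
      fix z show "g z * indicator {x<..y} z \<le> ennreal (f x) * indicator {x<..y} z"
        using that fmono by (auto simp: g_def indicator_def intro!: ennreal_leI)
    qed
    also have "\<dots> = ennreal (f x) * ennreal (y - x)" using that by (simp add: nn_integral_cmult_indicator)
    also have "\<dots> = ennreal (f x * (y - x))" using that fnn by (simp add: ennreal_mult)
    finally show ?thesis .
  qed
  have Ilow: "ennreal (f y * (y - x)) \<le> I x y" if "0 < x" "x < y" "y < T" for x y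
  proof -
    have "ennreal (f y * (y - x)) = ennreal (f y) * ennreal (y - x)" using that fnn by (simp add: ennreal_mult)
    also have "\<dots> = (\<integral>\<^sup>+ z. ennreal (f y) * indicator {x<..y} z \<partial>lborel)" using that by (simp add: nn_integral_cmult_indicator)
    also have "\<dots> \<le> I x y"
      unfolding I_def
    proof (intro nn_integral_mono)
      fix z show "ennreal (f y) * indicator {x<..y} z \<le> g z * indicator {x<..y} z"
        using that fmono by (auto simp: g_def indicator_def intro!: ennreal_leI)
    qed
    finally show ?thesis .
  qed
  have Iadd: "I a y = I a x + I x y" if "a \<le> x" "x \<le> y" for a x y
  proof -
    have "\<And>z. g z * indicator {a<..y} z = g z * indicator {a<..x} z + g z * indicator {x<..y} z"
      using that by (auto simp: indicator_def)
    then show ?thesis unfolding I_def by (simp add: nn_integral_add)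
  qed
  have Iempty: "I x x = 0" for x by (simp add: I_def)
  have Ioc_eq: "emeasure \<nu> {a<..b} = I a b" if ab: "0 < a" "a < b" "b < T" for a b
  proof -
    define G2 where "G2 x = enn2real (I a x)" for x
    have Ifin: "I x y < top" if "0 < x" "x < y" "y < T" for x y
      using Iup[OF that] by (simp add: order_le_less_trans)
    have Ifin': "I a x < top" if "a \<le> x" "x < T" for x
      using that Ifin[of a x] ab by (cases "a = x") (auto simp: Iempty)
    have Ireal: "I x y = ennreal (enn2real (I x y))" if "0 < x" "x < y" "y < T" for x y
      using Ifin[OF that] by simp
    have G2diff: "G2 y - G2 x = enn2real (I x y)" if "a \<le> x" "x < y" "y \<le> b" for x y
    proof -
      have "I a y = I a x + I x y" using Iadd[of a x y] that by simp
      then have "G2 y = enn2real (I a x) + enn2real (I x y)"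
        unfolding G2_def using that ab by (subst enn2real_plus[symmetric]) (auto intro: Ifin Ifin')
      then show ?thesis by (simp add: G2_def)
    qed
    have sq: "F b - F a = G2 b - G2 a"
    proof (rule squeeze_eq[where \<phi>=f])
      show "a < b" by fact
      show "f y \<le> f x" if "a \<le> x" "x \<le> y" "y \<le> b" for x y using fmono that ab by auto
      show "f y * (y - x) \<le> F y - F x \<and> F y - F x \<le> f x * (y - x)" if "a \<le> x" "x < y" "y \<le> b" for x y
        using fbd that ab by auto
      show "f y * (y - x) \<le> G2 y - G2 x \<and> G2 y - G2 x \<le> f x * (y - x)" if xy: "a \<le> x" "x < y" "y \<le> b" for x y
      proof -
        have xy': "0 < x" "x < y" "y < T" using xy ab by auto
        have "ennreal (f y * (y - x)) \<le> ennreal (enn2real (I x y))" using Ilow[OF xy'] Ireal[OF xy'] by simp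
        moreover have "ennreal (enn2real (I x y)) \<le> ennreal (f x * (y - x))" using Iup[OF xy'] Ireal[OF xy'] by simp
        moreover have "0 \<le> f x * (y - x)" using fnn xy' by simp
        ultimately show ?thesis using G2diff[OF xy] using enn2real_nonneg[of "I x y"] by (simp add: ennreal_le_iff2) (smt (verit))
      qed
    qed
    have "G2 b - G2 a = enn2real (I a b)" using G2diff[of a b] ab by simp
    then have "measure \<nu> {a<..b} = enn2real (I a b)" using sq Fioc[of a b] ab by simp
    then show ?thesis using Ireal[of a b] ab by (simp add: emeasure_eq_measure)
  qed
  define M2 where "M2 = density lborel g"
  have sM2: "sets M2 = sets borel" by (simp add: M2_def)
  have eM2: "emeasure M2 A = (\<integral>\<^sup>+ z. g z * indicator A z \<partial>lborel)" if "A \<in> sets borel" for A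
    unfolding M2_def using that by (subst emeasure_density) auto
  have Ioc2: "emeasure \<nu> {a<..b} = emeasure M2 {a<..b}" if "0 < a" "a < b" "b < T" for a b
    using Ioc_eq[OF that] eM2[of "{a<..b}"] by (simp add: I_def)
  have open_eq: "emeasure \<nu> {c<..<d} = emeasure M2 {c<..<d}" if cd: "0 \<le> c" "c < d" "d \<le> T" for c d
  proof -
    define A where "A n = {c + (d-c)/(real n+3) <.. d - (d-c)/(real n+3)}" for n :: nat
    have inc: "incseq A"
    proof (rule incseq_SucI)
      fix n
      have "(d-c)/(real (Suc n)+3) \<le> (d-c)/(real n+3)" using cd by (intro divide_left_mono) auto
      then show "A n \<subseteq> A (Suc n)" unfolding A_def by auto
    qed
    have U: "(\<Union>n. A n) = {c<..<d}"
    proof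
      show "(\<Union>n. A n) \<subseteq> {c<..<d}"
      proof
        fix y assume "y \<in> (\<Union>n. A n)"
        then obtain n where "y \<in> A n" by auto
        moreover have "0 < (d-c)/(real n+3)" using cd by simp
        ultimately show "y \<in> {c<..<d}" unfolding A_def by auto
      qed
      show "{c<..<d} \<subseteq> (\<Union>n. A n)"
      proof
        fix y assume y: "y \<in> {c<..<d}"
        define m where "m = min (y - c) (d - y)"
        have m0: "0 < m" using y by (simp add: m_def)
        obtain n :: nat where n: "(d - c)/m < real n" using reals_Archimedean2 by blast
        have "d - c < real n * m" using n m0 by (simp add: field_simps)
        also have "\<dots> \<le> (real n + 3) * m" using m0 by (simp add: mult_right_mono)
        finally have "(d-c)/(real n+3) < m" by (simp add: field_simps)
        then have "y \<in> A n" unfolding A_def m_def using y by auto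
        then show "y \<in> (\<Union>n. A n)" by auto
      qed
    qed
    have eachA: "emeasure \<nu> (A n) = emeasure M2 (A n)" for n
    proof -
      have p: "0 < (d-c)/(real n+3)" using cd by simp
      have "c * (1 + real n) < d * (1 + real n)" using cd by (intro mult_strict_right_mono) auto
      then have "2 * ((d-c)/(real n+3)) < d - c" using cd by (simp add: field_simps)
      then show ?thesis unfolding A_def by (intro Ioc2) (use p cd in linarith)+
    qed
    have rA: "range A \<subseteq> sets borel" unfolding A_def by auto
    have "emeasure \<nu> {c<..<d} = (SUP n. emeasure \<nu> (A n))"
      using SUP_emeasure_incseq[of A \<nu>] rA inc U sets by auto
    also have "\<dots> = (SUP n. emeasure M2 (A n))" using eachA by simp
    also have "\<dots> = emeasure M2 {c<..<d}"
      using SUP_emeasure_incseq[of A M2] rA inc U sM2 by auto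
    finally show ?thesis .
  qed
  define M1 where "M1 = density \<nu> (indicator {0<..<T})"
  have sM1: "sets M1 = sets borel" by (simp add: M1_def sets)
  have eM1: "emeasure M1 A = emeasure \<nu> (A \<inter> {0<..<T})" if "A \<in> sets borel" for A
  proof -
    have "emeasure M1 A = (\<integral>\<^sup>+ x. indicator {0<..<T} x * indicator A x \<partial>\<nu>)"
      unfolding M1_def using that by (subst emeasure_density) (auto simp: measurable_cong_sets[OF sets refl])
    also have "\<dots> = (\<integral>\<^sup>+ x. indicator (A \<inter> {0<..<T}) x \<partial>\<nu>)"
      by (intro nn_integral_cong) (auto simp: indicator_def)
    also have "\<dots> = emeasure \<nu> (A \<inter> {0<..<T})" using that by simp
    finally show ?thesis .
  qed
  have eM2': "emeasure M2 A = emeasure M2 (A \<inter> {0<..<T})" if "A \<in> sets borel" for A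
  proof -
    have "emeasure M2 A = (\<integral>\<^sup>+ z. g z * indicator A z \<partial>lborel)" using eM2 that by simp
    also have "\<dots> = (\<integral>\<^sup>+ z. g z * indicator (A \<inter> {0<..<T}) z \<partial>lborel)"
      by (intro nn_integral_cong) (auto simp: indicator_def g_def)
    also have "\<dots> = emeasure M2 (A \<inter> {0<..<T})" using eM2 that by simp
    finally show ?thesis .
  qed
  have M12: "M1 = M2"
  proof (rule measure_eqI_lessThan)
    show "sets M1 = sets borel" "sets M2 = sets borel" by (fact sM1, fact sM2)
    fix x
    show "emeasure M1 {x<..} < \<infinity>" using eM1[of "{x<..}"] by (simp add: emeasure_eq_measure)
    show "emeasure M1 {x<..} = emeasure M2 {x<..}"
    proof (cases "max x 0 < T")
      case True
      have e: "{x<..} \<inter> {0<..<T} = {max x 0<..<T}" by auto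
      show ?thesis using eM1[of "{x<..}"] eM2'[of "{x<..}"] open_eq[of "max x 0" T] True T
        unfolding e by simp
    next
      case False
      have e: "{x<..} \<inter> {0<..<T} = {}" using False by auto
      show ?thesis using eM1[of "{x<..}"] eM2'[of "{x<..}"] unfolding e by simp
    qed
  qed
  show ?thesis
  proof (intro exI[of _ f] conjI ballI impI)
    fix B :: "real set" assume B: "B \<in> sets borel" "B \<subseteq> {0<..<T}"
    have "emeasure \<nu> B = emeasure M1 B" using eM1[OF B(1)] B(2) by (simp add: Int_absorb2)
    also have "\<dots> = emeasure M2 B" by (simp add: M12)
    also have "\<dots> = (\<integral>\<^sup>+ z. g z * indicator B z \<partial>lborel)" using eM2 B by simp
    also have "\<dots> = (\<integral>\<^sup>+ z. ennreal (f z) * indicator B z \<partial>lborel)"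
      using B(2) by (intro nn_integral_cong) (auto simp: indicator_def g_def)
    finally show "emeasure \<nu> B = (\<integral>\<^sup>+ z. ennreal (f z) * indicator B z \<partial>lborel)" .
  qed (use fnn fcont fmono in auto)
qed




lemma real_of_ereal_in_iff: "0 \<notin> B \<Longrightarrow> (real_of_ereal e \<in> B) = (e \<in> ereal ` B)"
  by (cases e) auto

theorem mainTheorem10:
  fixes M :: "'a measure" and X :: "'a \<Rightarrow> real \<Rightarrow> real"
    and H :: "(real \<Rightarrow> real) set"
    and L :: "(real \<Rightarrow> real) \<Rightarrow> real \<Rightarrow> real \<Rightarrow> ereal" and T :: real
  assumes "shift_inv_periodic_set H"
    and "periodic_stationary_process M X H"
    and "first_time_ILF H L"
    and "0 < T" and "T \<le> 1"
  shows "\<exists>f :: real \<Rightarrow> real.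
           (\<forall>x\<in>{0<..<T}. 0 \<le> f x) \<and>
           (\<forall>x\<in>{0<..<T}. continuous (at_right x) f \<and> (\<exists>l. (f \<longlongrightarrow> l) (at_left x))) \<and>
           (\<forall>B\<in>sets borel. B \<subseteq> {0<..<T} \<longrightarrow>
              emeasure M {\<omega>\<in>space M. L (X \<omega>) 0 T \<in> ereal ` B}
                = (\<integral>\<^sup>+ x. ennreal (f x) * indicator B x \<partial>lborel)) \<and>
           (\<forall>x y. 0 < x \<longrightarrow> x \<le> y \<longrightarrow> y < T \<longrightarrow> f y \<le> f x)"
proof -
  have Hinv: "\<And>g c. g \<in> H \<Longrightarrow> theta c g \<in> H" using assms(1) by (auto simp: shift_inv_periodic_set_def)
  have PS: "prob_space M" and Xm: "X \<in> M \<rightarrow>\<^sub>M cyl" and XH: "\<And>\<omega>. \<omega> \<in> space M \<Longrightarrow> X \<omega> \<in> H"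
    and stat: "\<And>c. distr M cyl (\<lambda>\<omega>. theta c (X \<omega>)) = distr M cyl X"
    using assms(2) by (auto simp: periodic_stationary_process_def)
  interpret P: prob_space M by (rule PS)
  have ILF: "intrinsic_location_functional H L" using assms(3) by (simp add: first_time_ILF_def)
  have Lm: "\<And>a b. a < b \<Longrightarrow> (\<lambda>g. L g a b) \<in> restrict_space cyl H \<rightarrow>\<^sub>M (borel :: ereal measure)"
    using ILF by (simp add: intrinsic_location_functional_def)
  obtain S R where rep: "po_random_set_rep H L S R"
    and ft: "\<And>g t1 t2. g \<in> H \<Longrightarrow> t1 \<in> S g \<Longrightarrow> t2 \<in> S g \<Longrightarrow> t1 \<le> t2 \<Longrightarrow> R g t2 t1"
    using assms(3) unfolding first_time_ILF_def by blast
  note rep' = rep[unfolded po_random_set_rep_def]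
  have shiftS: "S g = (\<lambda>t. t + c) ` S (theta c g)" if "g \<in> H" for g c
    using bspec[OF rep' that, THEN conjunct2, THEN conjunct2, THEN conjunct2, THEN conjunct1] by blast
  have rep6: "\<forall>a b. a < b \<longrightarrow>
           (S g \<inter> {a..b} = {} \<longrightarrow> L g a b = \<infinity>) \<and>
           (S g \<inter> {a..b} \<noteq> {} \<longrightarrow>
              (\<exists>t. L g a b = ereal t \<and> t \<in> S g \<inter> {a..b} \<and>
                   (\<forall>s\<in>S g \<inter> {a..b}. R g t s \<longrightarrow> s = t) \<and>
                   (\<forall>u\<in>S g \<inter> {a..b}. (\<forall>s\<in>S g \<inter> {a..b}. R g u s \<longrightarrow> s = u) \<longrightarrow> u = t)))" if "g \<in> H" for g
    using bspec[OF rep' that, THEN conjunct2, THEN conjunct2, THEN conjunct2, THEN conjunct2, THEN conjunct2] .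
  have repE: "\<And>g a b. g \<in> H \<Longrightarrow> a < b \<Longrightarrow> S g \<inter> {a..b} = {} \<Longrightarrow> L g a b = \<infinity>"
    using rep6 by blast
  have repN: "\<exists>t. L g a b = ereal t \<and> t \<in> S g \<inter> {a..b} \<and> (\<forall>s\<in>S g \<inter> {a..b}. R g t s \<longrightarrow> s = t)"
    if "g \<in> H" "a < b" "S g \<inter> {a..b} \<noteq> {}" for g a b
  proof -
    have "(\<exists>t. L g a b = ereal t \<and> t \<in> S g \<inter> {a..b} \<and>
                   (\<forall>s\<in>S g \<inter> {a..b}. R g t s \<longrightarrow> s = t) \<and>
                   (\<forall>u\<in>S g \<inter> {a..b}. (\<forall>s\<in>S g \<inter> {a..b}. R g u s \<longrightarrow> s = u) \<longrightarrow> u = t))"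
      using rep6[OF that(1), rule_format, OF that(2), THEN conjunct2] that(3) by (rule mp)
    then show ?thesis by (elim exE conjE) (rule exI, intro conjI)
  qed
  have Lemp: "L g a b = \<infinity> \<longleftrightarrow> S g \<inter> {a..b} = {}" if gab: "g \<in> H" "a < b" for g a b
  proof
    assume inf: "L g a b = \<infinity>"
    show "S g \<inter> {a..b} = {}"
    proof (rule ccontr)
      assume "S g \<inter> {a..b} \<noteq> {}"
      then obtain t where "L g a b = ereal t" using repN[OF gab] by blast
      with inf show False by simp
    qed
  qed (rule repE[OF gab])
  have Lmin: "\<exists>t. L g a b = ereal t \<and> t \<in> S g \<inter> {a..b} \<and> (\<forall>u\<in>S g \<inter> {a..b}. t \<le> u)"
    if gab: "g \<in> H" "a < b" "S g \<inter> {a..b} \<noteq> {}" for g a b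
  proof -
    obtain t where t: "L g a b = ereal t" "t \<in> S g \<inter> {a..b}" "\<forall>s\<in>S g \<inter> {a..b}. R g t s \<longrightarrow> s = t"
      using repN[OF gab] by blast
    have "t \<le> u" if "u \<in> S g \<inter> {a..b}" for u
    proof (rule ccontr)
      assume "\<not> t \<le> u"
      then have "R g t u" using ft[of g u t] that t \<open>g \<in> H\<close> by auto
      then show False using t(3) that \<open>\<not> t \<le> u\<close> by auto
    qed
    then show ?thesis using t by blast
  qed
  have event: "L g 0 T \<in> ereal ` {s<..s+h} \<longleftrightarrow> (L (theta s g) (-s) 0 = \<infinity> \<and> L (theta s g) (-s) h \<noteq> \<infinity>)"
    if g: "g \<in> H" and sh: "0 < s" "0 < h" "s + h \<le> T" for g s h
  proof -
    have gs: "theta s g \<in> H" using Hinv g by blast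
    have SS: "S g = (\<lambda>t. t + s) ` S (theta s g)" by (rule shiftS[OF g])
    have e1: "S g \<inter> {0..s} = {} \<longleftrightarrow> S (theta s g) \<inter> {-s..0} = {}"
    proof
      assume "S g \<inter> {0..s} = {}" then show "S (theta s g) \<inter> {-s..0} = {}" unfolding SS by force
    next
      assume "S (theta s g) \<inter> {-s..0} = {}" then show "S g \<inter> {0..s} = {}" unfolding SS by force
    qed
    have e2: "S g \<inter> {0..s+h} = {} \<longleftrightarrow> S (theta s g) \<inter> {-s..h} = {}"
    proof
      assume "S g \<inter> {0..s+h} = {}" then show "S (theta s g) \<inter> {-s..h} = {}" unfolding SS by force
    next
      assume "S (theta s g) \<inter> {-s..h} = {}" then show "S g \<inter> {0..s+h} = {}" unfolding SS by force
    qed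
    have main: "L g 0 T \<in> ereal ` {s<..s+h} \<longleftrightarrow> (S g \<inter> {0..s} = {} \<and> S g \<inter> {0..s+h} \<noteq> {})"
    proof
      assume "L g 0 T \<in> ereal ` {s<..s+h}"
      then obtain r where r: "L g 0 T = ereal r" "r \<in> {s<..s+h}" by auto
      then have ne: "S g \<inter> {0..T} \<noteq> {}" using Lemp[OF g, of 0 T] assms(4) by auto
      obtain t where t: "L g 0 T = ereal t" "t \<in> S g \<inter> {0..T}" "\<forall>u\<in>S g \<inter> {0..T}. t \<le> u"
        using Lmin[OF g assms(4) ne] by blast
      have tr: "t = r" using t r by simp
      have "S g \<inter> {0..s} = {}"
      proof (rule ccontr)
        assume "S g \<inter> {0..s} \<noteq> {}"
        then obtain u where u: "u \<in> S g" "0 \<le> u" "u \<le> s" by auto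
        then have "t \<le> u" using t(3) sh by auto
        then show False using u r tr by auto
      qed
      moreover have "t \<in> S g \<inter> {0..s+h}" using t tr r by auto
      ultimately show "S g \<inter> {0..s} = {} \<and> S g \<inter> {0..s+h} \<noteq> {}" by blast
    next
      assume a: "S g \<inter> {0..s} = {} \<and> S g \<inter> {0..s+h} \<noteq> {}"
      then obtain u where u: "u \<in> S g" "0 \<le> u" "u \<le> s+h" by auto
      then have ne: "S g \<inter> {0..T} \<noteq> {}" using sh by auto
      obtain t where t: "L g 0 T = ereal t" "t \<in> S g \<inter> {0..T}" "\<forall>u\<in>S g \<inter> {0..T}. t \<le> u"
        using Lmin[OF g assms(4) ne] by blast
      have "t \<le> u" using t(3) u sh by auto
      moreover have "\<not> t \<le> s" using a t(2) by auto
      ultimately show "L g 0 T \<in> ereal ` {s<..s+h}" using t(1) u by auto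
    qed
    have l1: "L (theta s g) (-s) 0 = \<infinity> \<longleftrightarrow> S (theta s g) \<inter> {-s..0} = {}"
      using Lemp[OF gs, of "-s" 0] sh by simp
    have l2: "L (theta s g) (-s) h = \<infinity> \<longleftrightarrow> S (theta s g) \<inter> {-s..h} = {}"
      using Lemp[OF gs, of "-s" h] sh by simp
    show ?thesis unfolding main l1 l2 e1 e2 by blast
  qed
  have Xr: "X \<in> M \<rightarrow>\<^sub>M restrict_space cyl H" using Xm XH by (intro measurable_restrict_space2) auto
  have thetam: "(\<lambda>\<omega>. theta c (X \<omega>)) \<in> M \<rightarrow>\<^sub>M cyl" for c
  proof -
    have "(\<lambda>\<omega> i. X \<omega> (i + c)) \<in> M \<rightarrow>\<^sub>M cyl"
      by (rule measurable_PiM_single') (auto intro: measurable_compose[OF Xm measurable_component_singleton])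
    then show ?thesis by (simp add: theta_def)
  qed
  define Y where "Y \<omega> = real_of_ereal (L (X \<omega>) 0 T)" for \<omega>
  have Ym: "Y \<in> borel_measurable M"
    unfolding Y_def by (intro borel_measurable_real_of_ereal measurable_compose[OF Xr Lm[OF assms(4)]])
  define \<nu> where "\<nu> = distr M borel Y"
  define C where "C s h \<omega> \<longleftrightarrow> L (X \<omega>) (-s) 0 = \<infinity> \<and> L (X \<omega>) (-s) h \<noteq> \<infinity>" for s h \<omega>
  have Cset: "\<exists>A\<in>sets cyl. \<forall>g\<in>H. (g \<in> A \<longleftrightarrow> L g (-s) 0 = \<infinity> \<and> L g (-s) h \<noteq> \<infinity>)"
    if "0 < s" "0 < h" for s h
  proof -
    let ?N = "restrict_space cyl H"
    have sp: "space ?N = H" by (simp add: space_restrict_space space_PiM)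
    have E1: "(\<lambda>g. L g (-s) 0) -` {\<infinity>} \<inter> space ?N \<in> sets ?N"
      by (rule measurable_sets[OF Lm]) (use that in auto)
    have E2: "(\<lambda>g. L g (-s) h) -` (UNIV - {\<infinity>}) \<inter> space ?N \<in> sets ?N"
      by (rule measurable_sets[OF Lm]) (use that in auto)
    have "((\<lambda>g. L g (-s) 0) -` {\<infinity>} \<inter> space ?N) \<inter> ((\<lambda>g. L g (-s) h) -` (UNIV - {\<infinity>}) \<inter> space ?N) \<in> sets ?N"
      using E1 E2 by blast
    then obtain A where A: "A \<in> sets cyl"
      "((\<lambda>g. L g (-s) 0) -` {\<infinity>} \<inter> space ?N) \<inter> ((\<lambda>g. L g (-s) h) -` (UNIV - {\<infinity>}) \<inter> space ?N) = H \<inter> A"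
      unfolding sets_restrict_space by blast
    have "\<forall>g\<in>H. (g \<in> A \<longleftrightarrow> L g (-s) 0 = \<infinity> \<and> L g (-s) h \<noteq> \<infinity>)"
    proof
      fix g assume g: "g \<in> H"
      have "g \<in> H \<inter> A \<longleftrightarrow> L g (-s) 0 = \<infinity> \<and> L g (-s) h \<noteq> \<infinity>"
        unfolding A(2)[symmetric] sp using g by auto
      then show "g \<in> A \<longleftrightarrow> L g (-s) 0 = \<infinity> \<and> L g (-s) h \<noteq> \<infinity>" using g by auto
    qed
    then show ?thesis using A(1) by blast
  qed
  have prob_eq: "measure \<nu> {s<..s+h} = measure M {\<omega>\<in>space M. C s h \<omega>}"
    if sh: "0 < s" "0 < h" "s + h \<le> T" for s h
  proof -
    obtain A where A: "A \<in> sets cyl" "\<forall>g\<in>H. (g \<in> A \<longleftrightarrow> L g (-s) 0 = \<infinity> \<and> L g (-s) h \<noteq> \<infinity>)"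
      using Cset[of s h] sh by blast
    have "measure \<nu> {s<..s+h} = measure M (Y -` {s<..s+h} \<inter> space M)"
      by (simp add: \<nu>_def measure_distr Ym)
    also have "Y -` {s<..s+h} \<inter> space M = (\<lambda>\<omega>. theta s (X \<omega>)) -` A \<inter> space M"
    proof (intro set_eqI iffI)
      fix \<omega> assume "\<omega> \<in> Y -` {s<..s+h} \<inter> space M"
      then have w: "\<omega> \<in> space M" "real_of_ereal (L (X \<omega>) 0 T) \<in> {s<..s+h}" by (auto simp: Y_def)
      then have "L (X \<omega>) 0 T \<in> ereal ` {s<..s+h}" using real_of_ereal_in_iff[of "{s<..s+h}"] sh by auto
      then show "\<omega> \<in> (\<lambda>\<omega>. theta s (X \<omega>)) -` A \<inter> space M"
        using event[OF XH[OF w(1)] sh] A(2) Hinv[OF XH[OF w(1)]] w(1) by auto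
    next
      fix \<omega> assume "\<omega> \<in> (\<lambda>\<omega>. theta s (X \<omega>)) -` A \<inter> space M"
      then have w: "\<omega> \<in> space M" "theta s (X \<omega>) \<in> A" by auto
      then have "L (X \<omega>) 0 T \<in> ereal ` {s<..s+h}"
        using event[OF XH[OF w(1)] sh] A(2) Hinv[OF XH[OF w(1)]] by auto
      then have "real_of_ereal (L (X \<omega>) 0 T) \<in> {s<..s+h}" using real_of_ereal_in_iff[of "{s<..s+h}"] sh by auto
      then show "\<omega> \<in> Y -` {s<..s+h} \<inter> space M" using w by (auto simp: Y_def)
    qed
    also have "measure M ((\<lambda>\<omega>. theta s (X \<omega>)) -` A \<inter> space M) = measure (distr M cyl (\<lambda>\<omega>. theta s (X \<omega>))) A"
      using A(1) by (simp add: measure_distr thetam)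
    also have "\<dots> = measure (distr M cyl X) A" by (simp add: stat)
    also have "\<dots> = measure M (X -` A \<inter> space M)" using A(1) by (simp add: measure_distr Xm)
    also have "X -` A \<inter> space M = {\<omega>\<in>space M. C s h \<omega>}" using A(2) XH by (auto simp: C_def)
    finally show ?thesis .
  qed
  have Cmono: "measure M {\<omega>\<in>space M. C s' h \<omega>} \<le> measure M {\<omega>\<in>space M. C s h \<omega>}"
    if sh: "0 < s" "s \<le> s'" "0 < h" for s s' h
  proof -
    obtain A where A: "A \<in> sets cyl" "\<forall>g\<in>H. (g \<in> A \<longleftrightarrow> L g (-s) 0 = \<infinity> \<and> L g (-s) h \<noteq> \<infinity>)"
      using Cset[of s h] sh by blast
    have "X -` A \<inter> space M \<in> sets M" by (rule measurable_sets[OF Xm A(1)])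
    moreover have "X -` A \<inter> space M = {\<omega>\<in>space M. C s h \<omega>}" using A(2) XH by (auto simp: C_def)
    ultimately have meas: "{\<omega>\<in>space M. C s h \<omega>} \<in> sets M" by simp
    have sub: "{\<omega>\<in>space M. C s' h \<omega>} \<subseteq> {\<omega>\<in>space M. C s h \<omega>}"
    proof safe
      fix \<omega> assume w: "\<omega> \<in> space M" "C s' h \<omega>"
      have g: "X \<omega> \<in> H" using XH w by simp
      have a1: "S (X \<omega>) \<inter> {-s'..0} = {}" using w(2) Lemp[OF g, of "-s'" 0] sh by (simp add: C_def)
      have a2: "S (X \<omega>) \<inter> {-s'..h} \<noteq> {}" using w(2) Lemp[OF g, of "-s'" h] sh by (simp add: C_def)
      have b1: "S (X \<omega>) \<inter> {-s..0} = {}" using a1 sh by auto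
      have b2: "S (X \<omega>) \<inter> {-s..h} \<noteq> {}"
      proof -
        obtain u where u: "u \<in> S (X \<omega>)" "-s' \<le> u" "u \<le> h" using a2 by auto
        then have "0 < u" using a1 by force
        then show ?thesis using u sh by auto
      qed
      show "C s h \<omega>" using b1 b2 Lemp[OF g, of "-s" 0] Lemp[OF g, of "-s" h] sh by (simp add: C_def)
    qed
    show ?thesis by (rule P.finite_measure_mono[OF sub meas])
  qed
  have fin: "finite_measure \<nu>"
    using P.prob_space_distr[OF Ym] unfolding \<nu>_def prob_space_def by blast
  have sets\<nu>: "sets \<nu> = sets borel" by (simp add: \<nu>_def)
  have incr: "measure \<nu> {s'<..s'+h} \<le> measure \<nu> {s<..s+h}"
    if "0 < s" "s \<le> s'" "0 < h" "s' + h < T" for s s' h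
    using prob_eq[of s' h] prob_eq[of s h] Cmono[of s s' h] that by simp
  obtain f where f1: "\<forall>x\<in>{0<..<T}. 0 \<le> f x"
    and f2: "\<forall>x\<in>{0<..<T}. continuous (at_right x) f \<and> (\<exists>l. (f \<longlongrightarrow> l) (at_left x))"
    and f3: "\<forall>B\<in>sets borel. B \<subseteq> {0<..<T} \<longrightarrow> emeasure \<nu> B = (\<integral>\<^sup>+ x. ennreal (f x) * indicator B x \<partial>lborel)"
    and f4: "\<forall>x y. 0 < x \<longrightarrow> x \<le> y \<longrightarrow> y < T \<longrightarrow> f y \<le> f x"
    using analytic_main[OF fin sets\<nu> assms(4) incr] by blast
  show ?thesis
  proof (intro exI[of _ f] conjI ballI impI)
    fix B :: "real set" assume B: "B \<in> sets borel" "B \<subseteq> {0<..<T}"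
    have "{\<omega>\<in>space M. L (X \<omega>) 0 T \<in> ereal ` B} = Y -` B \<inter> space M"
    proof -
      have "0 \<notin> B" using B(2) by auto
      from real_of_ereal_in_iff[OF this] show ?thesis by (auto simp: Y_def)
    qed
    then have "emeasure M {\<omega>\<in>space M. L (X \<omega>) 0 T \<in> ereal ` B} = emeasure \<nu> B"
      using B(1) by (simp add: \<nu>_def emeasure_distr Ym)
    then show "emeasure M {\<omega>\<in>space M. L (X \<omega>) 0 T \<in> ereal ` B} = (\<integral>\<^sup>+ x. ennreal (f x) * indicator B x \<partial>lborel)"
      using f3 B by simp
  qed (use f1 f2 f4 in auto)
qed


end
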